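(* Let $\tau:\mathcal D\to\mathcal D$ be injective with inverse $\sigma=\tau^{-1}:\tau(\mathcal D)\to\mathcal D$. Then $$\frac{\|S_\sigma\|_{\mathrm{BMO}}^2}{A}\;\le\;\sup_{\mathcal H\subseteq\tau(\mathcal D)}\frac{1}{|\sigma(\mathcal H)^*|}\int_0^1\mu_{\mathcal H}(t)\,dt\;\le\;\|S_\sigma\|_{\mathrm{BMO}}^2,$$ where $A>0$ is a constant depending only on the constants in the atomic decomposition of dyadic $H^1$ (in particular not on $\tau$). (Both sides may be $+\infty$.)
   Context: $\mathcal D$ denotes the collection of dyadic intervals $[(k-1)2^{-n},k2^{-n})$, $n\ge 0$, $1\le k\le 2^n$, in $[0,1)$; $|I|$ is Lebesgue measure. For a collection $\mathcal E$ of dyadic intervals, $\mathcal E^*=\bigcup_{I\in\mathcal E}I$. The Haar function $h_I$ equals $1$ on the left half of $I$, $-1$ on the right half, and $0$ outside $I$. For $\mathcal H\subseteq\tau(\mathcal D)$ define the maximal function $\mu_{\mathcal H}(t)=\sup_{I\in\mathcal H}\frac{|\sigma(I)|}{|I|}\mathbf 1_I(t)$. Dyadic BMO: a formal Haar series $f=\sum_J a_J h_J$ (real $a_J$) belongs to BMO if $\|f\|_{\mathrm{BMO}}^2=\sup_{I\in\mathcal D}\frac1{|I|}\big\|\sum_{J\subseteq I}a_Jh_J\big\|_{L^2}^2<\infty$. $S_\sigma$ is the linear operator with $S_\sigma(h_I)=h_{\sigma(I)}$ for $I\in\tau(\mathcal D)$ and $S_\sigma(h_I)=0$ for $I\in\mathcal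 D\setminus\tau(\mathcal D)$, and $\|S_\sigma\|_{\mathrm{BMO}}$ denotes its operator norm on dyadic BMO. *)

theory Defs
  imports "HOL-Analysis.Analysis"
begin

definition dyadic :: "real set set" where
  "dyadic = {{(real k - 1) / 2 ^ n ..< real k / 2 ^ n} | n k. 1 \<le> k \<and> k \<le> 2 ^ n}"

abbreviation len :: "real set \<Rightarrow> ennreal" where
  "len I \<equiv> emeasure lborel I"

text \<open>Haar function h_I (for documentation; the L2 norm of a formal Haar series is computed
  via orthogonality of the h_J, with squared norm of h_J equal to |J|).\<close>
definition haar :: "real set \<Rightarrow> real \<Rightarrow> real" where
  "haar I t = (if t \<in> I \<and> t < (Inf I + Sup I) / 2 then 1
               else if t \<in> I then -1 else 0)"

text \<open>A formal Haar series is given by its coefficient family a (only values on dyadic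
  intervals matter).  Squared L2 norm of the partial series over J contained in I:\<close>
definition local_l2_sq :: "(real set \<Rightarrow> real) \<Rightarrow> real set \<Rightarrow> ennreal" where
  "local_l2_sq a I = (\<integral>\<^sup>+ J. ennreal ((a J)\<^sup>2) * len J \<partial>count_space {J \<in> dyadic. J \<subseteq> I})"

definition bmo_sq :: "(real set \<Rightarrow> real) \<Rightarrow> ennreal" where
  "bmo_sq a = (SUP I \<in> dyadic. local_l2_sq a I / len I)"

definition sigma_of :: "(real set \<Rightarrow> real set) \<Rightarrow> real set \<Rightarrow> real set" where
  "sigma_of \<tau> = inv_into dyadic \<tau>"

text \<open>S_sigma, the linear extension of h_I to h_{sigma I} (I in tau(D)), h_I \<mapsto> 0 otherwise,
  acting on coefficient families.\<close>
definition S_op :: "(real set \<Rightarrow> real set) \<Rightarrow> (real set \<Rightarrow> real) \<Rightarrow> (real set \<Rightarrow> real)" where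
  "S_op \<tau> a = (\<lambda>J. \<Sum>I \<in> {I \<in> \<tau> ` dyadic. sigma_of \<tau> I = J}. a I)"

definition S_norm_sq :: "(real set \<Rightarrow> real set) \<Rightarrow> ennreal" where
  "S_norm_sq \<tau> = Inf {C. \<forall>a. bmo_sq a < top \<longrightarrow> bmo_sq (S_op \<tau> a) \<le> C * bmo_sq a}"

definition mu :: "(real set \<Rightarrow> real set) \<Rightarrow> real set set \<Rightarrow> real \<Rightarrow> ennreal" where
  "mu \<tau> H t = (SUP I \<in> H. len (sigma_of \<tau> I) / len I * indicator I t)"

definition middle :: "(real set \<Rightarrow> real set) \<Rightarrow> ennreal" where
  "middle \<tau> = (SUP H \<in> {H. H \<subseteq> \<tau> ` dyadic \<and> H \<noteq> {}}.
      (\<integral>\<^sup>+ t. mu \<tau> H t * indicator {0..<1} t \<partial>lborel) / len (\<Union> (sigma_of \<tau> ` H)))"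

end

theory Submission
  imports Defs
begin

lemma nest_aux:
  fixes n m k l :: nat and t :: real
  assumes "n \<le> m" "1 \<le> k" "1 \<le> l"
    "t \<in> {(real k - 1)/2^n..<real k/2^n}" "t \<in> {(real l-1)/2^m..<real l/2^m}"
  shows "{(real l-1)/2^m..<real l/2^m} \<subseteq> {(real k - 1)/2^n..<real k/2^n}"
proof -
  define d :: nat where "d = 2^(m-n)"
  have pm: "(2::real)^m = 2^n * real d" unfolding d_def
    by (metis assms(1) le_add_diff_inverse of_nat_numeral of_nat_power power_add)
  have pn: "(0::real) < 2^n" by simp
  have dpos: "0 < real d" unfolding d_def by simp
  have "(real k - 1) / 2^n \<le> t" "t < real k / 2^n" using assms(4) by auto
  hence "(real k - 1) \<le> t * 2^n" "t * 2^n < real k" using pn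
    by (simp_all add: divide_le_eq less_divide_eq)
  hence a1: "(real k - 1) * real d \<le> t * 2^m" "t*2^m < real k * real d"
    unfolding pm using dpos by (simp_all add: mult.assoc[symmetric])
  have "(real l - 1) / 2^m \<le> t" "t < real l / 2^m" using assms(5) by auto
  hence a2: "(real l - 1) \<le> t * 2^m" "t * 2^m < real l"
    by (simp_all add: divide_le_eq less_divide_eq)
  have "real ((k-1)*d) < real l" using a1 a2 assms(2) by (simp add: of_nat_diff)
  hence "(k-1)*d < l" by linarith
  hence b1: "real (k-1) * real d \<le> real l - 1" 
    by (metis Suc_leI Suc_pred' assms(3) diff_Suc_1 le_0_eq less_one not_le of_nat_1 of_nat_diff of_nat_le_iff of_nat_mult)
  have "real l < real (k*d) + 1" using a1 a2 by simp
  hence "l \<le> k * d" by linarith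
  hence b2: "real l \<le> real k * real d" by (metis of_nat_le_iff of_nat_mult)
  show ?thesis
  proof
    fix x assume "x \<in> {(real l-1)/2^m..<real l/2^m}"
    hence x: "real l - 1 \<le> x * 2^m" "x * 2^m < real l" by (simp_all add: divide_le_eq less_divide_eq)
    have "(real k - 1) * real d \<le> x * 2^n * real d" using b1 x assms(2) unfolding pm by (simp add: of_nat_diff mult.assoc)
    hence "real k - 1 \<le> x * 2^n" using dpos by simp
    moreover have "x * 2^n * real d < real k * real d" using b2 x unfolding pm by (simp add: mult.assoc)
    hence "x * 2^n < real k" using dpos by simp
    ultimately show "x \<in> {(real k - 1)/2^n..<real k/2^n}" using pn by (simp add: divide_le_eq less_divide_eq)
  qed
qed

lemma dyadic_iff: "J \<in> dyadic \<longleftrightarrow> (\<exists>n k. 1 \<le> k \<and> k \<le> (2::nat) ^ n \<and> J = {(real k - 1) / 2 ^ n ..< real k / 2 ^ n})"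
  unfolding dyadic_def by blast

lemma dyadic_nest:
  assumes "I \<in> dyadic" "J \<in> dyadic" "I \<inter> J \<noteq> {}"
  shows "I \<subseteq> J \<or> J \<subseteq> I"
proof -
  obtain n k where I: "1 \<le> k" "I = {(real k - 1) / 2 ^ n ..< real k / 2 ^ n}" using assms(1) dyadic_iff by auto
  obtain m l where J: "1 \<le> l" "J = {(real l - 1) / 2 ^ m ..< real l / 2 ^ m}" using assms(2) dyadic_iff by auto
  obtain t where t: "t \<in> I" "t \<in> J" using assms(3) by auto
  show ?thesis
  proof (cases "n \<le> m")
    case True thus ?thesis using nest_aux[of n m k l t] I J t by auto
  next
    case False thus ?thesis using nest_aux[of m n l k t] I J t by auto
  qed
qed

lemma dyadic_props:
  assumes "J \<in> dyadic"
  shows "J \<subseteq> {0..<1}" "J \<in> sets lborel" "0 < measure lborel J" "len J = ennreal (measure lborel J)"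
    "J \<noteq> {}" "len J \<noteq> 0" "len J < top" "measure lborel J \<le> 1"
proof -
  obtain n k where k: "1 \<le> k" "k \<le> (2::nat)^n" and J: "J = {(real k - 1) / 2 ^ n ..< real k / 2 ^ n}"
    using assms dyadic_iff by auto
  have pn: "(0::real) < 2^n" by simp
  have kk: "real k \<le> 2^n" using k(2) by (metis of_nat_le_iff of_nat_numeral of_nat_power)
  have lt: "(real k - 1) / 2 ^ n < real k / 2 ^ n" using pn by (simp add: divide_strict_right_mono)
  have m: "measure lborel J = 1 / 2^n" unfolding J using lt by (simp add: diff_divide_distrib)
  show "J \<subseteq> {0..<1}" unfolding J using k kk pn by (auto simp: divide_le_eq less_divide_eq)
  show "J \<in> sets lborel" unfolding J by simp
  show "0 < measure lborel J" using m by simp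
  show "len J = ennreal (measure lborel J)" unfolding J using lt by simp
  thus "len J \<noteq> 0" "len J < top" using m by simp_all
  show "J \<noteq> {}" unfolding J using lt by simp
  show "measure lborel J \<le> 1" using m by simp
qed

lemma countable_dyadic: "countable dyadic"
proof -
  have "dyadic \<subseteq> (\<lambda>(n::nat, k::nat). {(real k - 1) / 2 ^ n ..< real k / 2 ^ n}) ` UNIV"
    unfolding dyadic_def by auto
  thus ?thesis by (rule countable_subset) simp
qed

lemma div_le_iff_ennreal:
  fixes a b c :: ennreal
  assumes "b \<noteq> 0" "b < top"
  shows "a / b \<le> c \<longleftrightarrow> a \<le> c * b"
proof
  assume "a / b \<le> c"
  hence "(a / b) * b \<le> c * b" by (rule mult_right_mono) simp
  moreover have "(a/b) * b = a" using assms by (simp add: ennreal_divide_times)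
  ultimately show "a \<le> c * b" by simp
next
  assume "a \<le> c * b"
  hence "a / b \<le> c * b / b" by (rule divide_right_mono_ennreal)
  thus "a / b \<le> c" using assms by (simp add: mult_divide_eq_ennreal)
qed

lemma count_ge:
  fixes f :: "'a \<Rightarrow> ennreal"
  assumes "finite G" "G \<subseteq> A"
  shows "sum f G \<le> integral\<^sup>N (count_space A) f"
proof -
  have "sum f G = integral\<^sup>N (count_space G) f" using assms by (simp add: nn_integral_count_space_finite)
  also have "\<dots> = (\<integral>\<^sup>+x. f x * indicator G x \<partial>count_space UNIV)"
    by (rule nn_integral_count_space_indicator) simp
  also have "\<dots> \<le> (\<integral>\<^sup>+x. f x * indicator A x \<partial>count_space UNIV)"
    using assms by (intro nn_integral_mono) (auto simp: indicator_def)
  also have "\<dots> = integral\<^sup>N (count_space A) f"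
    by (rule nn_integral_count_space_indicator[symmetric]) simp
  finally show ?thesis .
qed

lemma count_le:
  fixes f :: "'a \<Rightarrow> ennreal"
  assumes "countable A" "\<And>G. finite G \<Longrightarrow> G \<subseteq> A \<Longrightarrow> sum f G \<le> X"
  shows "integral\<^sup>N (count_space A) f \<le> X"
proof (cases "A = {}")
  case True thus ?thesis using assms(2)[of "{}"] by (simp add: nn_integral_count_space_finite)
next
  case False
  define g where "g n = from_nat_into A ` {..n}" for n
  have gA: "g n \<subseteq> A" for n unfolding g_def using from_nat_into[OF False] by blast
  have inc: "incseq (\<lambda>n x. f x * indicator (g n) x)"
    unfolding g_def by (auto simp: incseq_def le_fun_def indicator_def)
  have un: "(\<Union>n. g n) = A"
  proof
    show "(\<Union>n. g n) \<subseteq> A" using gA by blast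
    show "A \<subseteq> (\<Union>n. g n)"
    proof
      fix x assume "x \<in> A"
      then obtain n where "x = from_nat_into A n" using range_from_nat_into[OF False assms(1)] by (metis rangeE)
      hence "x \<in> g n" unfolding g_def by blast
      thus "x \<in> (\<Union>n. g n)" by blast
    qed
  qed
  have "integral\<^sup>N (count_space A) f = (\<integral>\<^sup>+x. f x * indicator A x \<partial>count_space UNIV)"
    by (rule nn_integral_count_space_indicator) simp
  also have "\<dots> = (\<integral>\<^sup>+x. (SUP n. f x * indicator (g n) x) \<partial>count_space UNIV)"
  proof (rule nn_integral_cong)
    fix x
    show "f x * indicator A x = (SUP n. f x * indicator (g n) x)"
    proof (cases "x \<in> A")
      case True
      then obtain n where "x \<in> g n" using un by auto
      hence "f x \<le> (SUP n. f x * indicator (g n) x)" by (intro SUP_upper2[of n]) auto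
      moreover have "(SUP n. f x * indicator (g n) x) \<le> f x" by (intro SUP_least) (auto simp: indicator_def)
      ultimately show ?thesis using True by auto
    next
      case False
      hence "\<And>n. x \<notin> g n" using gA by blast
      thus ?thesis using False by simp
    qed
  qed
  also have "\<dots> = (SUP n. \<integral>\<^sup>+x. f x * indicator (g n) x \<partial>count_space UNIV)"
    by (rule nn_integral_monotone_convergence_SUP[OF inc]) simp
  also have "\<dots> \<le> X"
  proof (rule SUP_least)
    fix n
    have "(\<integral>\<^sup>+x. f x * indicator (g n) x \<partial>count_space UNIV) = integral\<^sup>N (count_space (g n)) f"
      by (rule nn_integral_count_space_indicator[symmetric]) simp
    also have "\<dots> = sum f (g n)" by (simp add: g_def nn_integral_count_space_finite)
    also have "\<dots> \<le> X" using assms(2)[of "g n"] gA by (simp add: g_def)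
    finally show "(\<integral>\<^sup>+x. f x * indicator (g n) x \<partial>count_space UNIV) \<le> X" .
  qed
  finally show ?thesis .
qed

lemma sigma_tau: "inj_on \<tau> dyadic \<Longrightarrow> J \<in> dyadic \<Longrightarrow> sigma_of \<tau> (\<tau> J) = J"
  unfolding sigma_of_def by (simp add: inv_into_f_f)

lemma S_op_eq:
  assumes "inj_on \<tau> dyadic" "J \<in> dyadic"
  shows "S_op \<tau> a J = a (\<tau> J)"
proof -
  have "{I \<in> \<tau> ` dyadic. sigma_of \<tau> I = J} = {\<tau> J}"
    using assms sigma_tau[OF assms(1)] by auto
  thus ?thesis unfolding S_op_def by simp
qed

lemma local_le_bmo:
  assumes "L \<in> dyadic"
  shows "local_l2_sq a L \<le> bmo_sq a * len L"
proof -
  have "local_l2_sq a L / len L \<le> bmo_sq a" unfolding bmo_sq_def using assms by (rule SUP_upper)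
  thus ?thesis using div_le_iff_ennreal dyadic_props(6,7)[OF assms] by blast
qed

lemma carleson:
  assumes "finite E" "E \<subseteq> dyadic"
  shows "(\<Sum>J\<in>E. ennreal ((a J)\<^sup>2) * len J) \<le> bmo_sq a * len (\<Union>E)"
proof -
  define M where "M = {L\<in>E. \<forall>L'\<in>E. L \<subseteq> L' \<longrightarrow> L' = L}"
  define P where "P L = {J\<in>E. J \<subseteq> L}" for L
  define f where "f J = ennreal ((a J)\<^sup>2) * len J" for J
  have Msub: "M \<subseteq> E" unfolding M_def by auto
  have fM: "finite M" using Msub assms(1) finite_subset by blast
  have cover: "\<exists>L\<in>M. J \<subseteq> L" if JE: "J \<in> E" for J
  proof -
    obtain L where "L \<in> E" "J \<subseteq> L" "\<forall>b\<in>E. L \<subseteq> b \<longrightarrow> L = b"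
      using finite_has_maximal2[OF assms(1) JE] by blast
    thus ?thesis unfolding M_def by auto
  qed
  have Mdisj: "L \<inter> L' = {}" if "L \<in> M" "L' \<in> M" "L \<noteq> L'" for L L'
  proof (rule ccontr)
    assume "L \<inter> L' \<noteq> {}"
    hence "L \<subseteq> L' \<or> L' \<subseteq> L" using dyadic_nest that Msub assms(2) by blast
    thus False using that unfolding M_def by auto
  qed
  have Eun: "E = (\<Union>L\<in>M. P L)" unfolding P_def using cover Msub by auto
  have Pdisj: "P L \<inter> P L' = {}" if "L \<in> M" "L' \<in> M" "L \<noteq> L'" for L L'
  proof -
    { fix J assume J: "J \<in> E" "J \<subseteq> L" "J \<subseteq> L'"
      have "J \<noteq> {}" using J assms(2) dyadic_props(5) by auto
      hence False using J Mdisj[OF that] by blast }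
    thus ?thesis unfolding P_def by auto
  qed
  have fP: "finite (P L)" for L unfolding P_def using assms(1) by simp
  have "sum f E = sum f (\<Union>L\<in>M. P L)" using Eun by simp
  also have "\<dots> = (\<Sum>L\<in>M. sum f (P L))"
    by (rule sum.UNION_disjoint) (use fM fP Pdisj in blast)+
  also have "\<dots> \<le> (\<Sum>L\<in>M. bmo_sq a * len L)"
  proof (rule sum_mono)
    fix L assume L: "L \<in> M"
    have Ld: "L \<in> dyadic" using L Msub assms(2) by auto
    have "sum f (P L) \<le> local_l2_sq a L" unfolding local_l2_sq_def f_def
      by (rule count_ge) (use assms(2) fP[of L] in \<open>auto simp: P_def\<close>)
    also have "\<dots> \<le> bmo_sq a * len L" using Ld by (rule local_le_bmo)
    finally show "sum f (P L) \<le> bmo_sq a * len L" .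
  qed
  also have "\<dots> = bmo_sq a * (\<Sum>L\<in>M. len L)" by (simp add: sum_distrib_left)
  also have "(\<Sum>L\<in>M. len L) = len (\<Union>L\<in>M. L)"
  proof (rule sum_emeasure)
    show "(\<lambda>L. L) ` M \<subseteq> sets lborel" using Msub assms(2) dyadic_props(2) by blast
    show "disjoint_family_on (\<lambda>L. L) M" using Mdisj unfolding disjoint_family_on_def by blast
  qed (rule fM)
  also have "(\<Union>L\<in>M. L) = \<Union>E" using cover Msub by blast
  finally show ?thesis unfolding f_def .
qed

definition maxw :: "real set set \<Rightarrow> (real set \<Rightarrow> real) \<Rightarrow> real \<Rightarrow> real" where
  "maxw F w t = Max (insert 0 ((\<lambda>K. w K * indicator K t) ` F))"

lemma maxw_ge0: "finite F \<Longrightarrow> 0 \<le> maxw F w t"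
  unfolding maxw_def by (rule Max_ge) auto

lemma maxw_ge: "finite F \<Longrightarrow> K \<in> F \<Longrightarrow> w K * indicator K t \<le> maxw F w t"
  unfolding maxw_def by (rule Max_ge) auto

lemma maxw_le: "finite F \<Longrightarrow> 0 \<le> x \<Longrightarrow> (\<And>K. K \<in> F \<Longrightarrow> w K * indicator K t \<le> x) \<Longrightarrow> maxw F w t \<le> x"
  unfolding maxw_def by (subst Max_le_iff) auto

lemma maxw_in: "finite F \<Longrightarrow> maxw F w t = 0 \<or> (\<exists>K\<in>F. maxw F w t = w K * indicator K t)"
proof -
  assume "finite F"
  hence "maxw F w t \<in> insert 0 ((\<lambda>K. w K * indicator K t) ` F)" unfolding maxw_def by (intro Max_in) auto
  thus ?thesis by auto
qed

lemma maxw_zero: "finite F \<Longrightarrow> t \<notin> \<Union>F \<Longrightarrow> maxw F w t = 0"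
  by (rule antisym[OF maxw_le maxw_ge0]) auto

lemma maxw_meas:
  assumes "finite F" "F \<subseteq> sets lborel"
  shows "maxw F w \<in> borel_measurable lborel"
proof (cases "F = {}")
  case True
  have "maxw F w = (\<lambda>t. 0)" using True by (intro ext) (simp add: maxw_def)
  thus ?thesis by simp
next
  case False
  have eq: "maxw F w = (\<lambda>t. max 0 (Max ((\<lambda>K. w K * indicator K t) ` F)))"
    unfolding maxw_def using assms(1) False by (intro ext) (simp add: Max_insert)
  have "(\<lambda>t. Max ((\<lambda>K. w K * indicator K t) ` F)) \<in> borel_measurable lborel"
    using assms by (intro borel_measurable_Max) auto
  thus ?thesis unfolding eq by measurable
qed

lemma maxw_step:
  assumes F: "finite F" and K0: "K0 \<in> F" and mK: "\<And>K. K \<in> F \<Longrightarrow> m \<le> w K" and m: "m = w K0" "0 \<le> m"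
  shows "maxw F w t = m * indicator (\<Union>F) t + maxw (F - {K0}) (\<lambda>K. max 0 (w K - m)) t"
    (is "_ = _ + maxw ?F' ?w' t")
proof (cases "t \<in> \<Union>F")
  case False
  hence "t \<notin> \<Union>?F'" by blast
  thus ?thesis using False F by (simp add: maxw_zero)
next
  case True
  then obtain K1 where K1: "K1 \<in> F" "t \<in> K1" by blast
  have F': "finite ?F'" using F by simp
  have a: "maxw F w t \<le> m + maxw ?F' ?w' t"
  proof (rule maxw_le[OF F])
    show "0 \<le> m + maxw ?F' ?w' t" using m(2) maxw_ge0[OF F'] by simp
    fix K assume K: "K \<in> F"
    show "w K * indicator K t \<le> m + maxw ?F' ?w' t"
    proof (cases "t \<in> K")
      case False thus ?thesis using m(2) maxw_ge0[OF F', of ?w' t] by simp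
    next
      case True
      show ?thesis
      proof (cases "K = K0")
        case True thus ?thesis using \<open>t \<in> K\<close> m maxw_ge0[OF F', of ?w' t] by simp
      next
        case False
        hence "?w' K * indicator K t \<le> maxw ?F' ?w' t" using K by (intro maxw_ge[OF F']) auto
        thus ?thesis using \<open>t \<in> K\<close> by simp
      qed
    qed
  qed
  have wF: "w K * indicator K t \<le> maxw F w t" if "K \<in> F" for K using maxw_ge[OF F that] .
  have mle: "m \<le> maxw F w t" using wF[OF K1(1)] mK[OF K1(1)] K1(2) by simp
  have b: "maxw ?F' ?w' t \<le> maxw F w t - m"
  proof (rule maxw_le[OF F'])
    show "0 \<le> maxw F w t - m" using mle by simp
    fix K assume K: "K \<in> ?F'"
    show "?w' K * indicator K t \<le> maxw F w t - m"
    proof (cases "t \<in> K")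
      case False thus ?thesis using mle by simp
    next
      case True thus ?thesis using wF[of K] K mle by simp
    qed
  qed
  show ?thesis using a b True by simp
qed

lemma embed:
  fixes c :: "real set \<Rightarrow> ennreal" and B :: ennreal and w :: "real set \<Rightarrow> real"
  assumes "finite F" "F \<subseteq> dyadic" "\<And>K. 0 \<le> w K" "\<And>E. E \<subseteq> F \<Longrightarrow> sum c E \<le> B * len (\<Union>E)"
  shows "(\<Sum>K\<in>F. c K * ennreal (w K)) \<le> B * (\<integral>\<^sup>+t. ennreal (maxw F w t) \<partial>lborel)"
  using assms
proof (induction "card F" arbitrary: F w rule: less_induct)
  case less
  note fin = less.prems(1)
  show ?case
  proof (cases "F = {}")
    case True thus ?thesis by simp
  next
    case False
    have "Min (w ` F) \<in> w ` F" using fin False by (intro Min_in) auto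
    then obtain K0 where K0: "K0 \<in> F" "w K0 = Min (w ` F)" by auto
    have K0le: "w K0 \<le> w K" if "K \<in> F" for K using K0(2) fin that by simp
    define m where "m = w K0"
    define w' where "w' K = max 0 (w K - m)" for K
    define F' where "F' = F - {K0}"
    have m0: "0 \<le> m" unfolding m_def using less.prems(3) .
    have finF': "finite F'" unfolding F'_def using fin by simp
    have IH: "(\<Sum>K\<in>F'. c K * ennreal (w' K)) \<le> B * (\<integral>\<^sup>+t. ennreal (maxw F' w' t) \<partial>lborel)"
    proof (rule less.hyps)
      show "card F' < card F" unfolding F'_def by (rule card_Diff1_less[OF fin K0(1)])
      show "finite F'" by (rule finF')
      show "F' \<subseteq> dyadic" unfolding F'_def using less.prems(2) by blast
      show "\<And>K. 0 \<le> w' K" unfolding w'_def by simp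
      show "\<And>E. E \<subseteq> F' \<Longrightarrow> sum c E \<le> B * len (\<Union> E)" using less.prems(4) unfolding F'_def by blast
    qed
    have pt: "c K * ennreal (w K) = ennreal m * c K + c K * ennreal (w' K)" if "K \<in> F" for K
    proof -
      have "w K = m + w' K" unfolding w'_def m_def using K0le[OF that] by simp
      hence "ennreal (w K) = ennreal m + ennreal (w' K)" using m0 by (simp add: w'_def ennreal_plus[symmetric] del: ennreal_plus)
      thus ?thesis by (simp add: algebra_simps)
    qed
    have "(\<Sum>K\<in>F. c K * ennreal (w K)) = (\<Sum>K\<in>F. ennreal m * c K + c K * ennreal (w' K))"
      using pt by (rule sum.cong[OF refl])
    also have "\<dots> = ennreal m * sum c F + (\<Sum>K\<in>F. c K * ennreal (w' K))"
      by (simp add: sum.distrib sum_distrib_left)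
    also have "(\<Sum>K\<in>F. c K * ennreal (w' K)) = (\<Sum>K\<in>F'. c K * ennreal (w' K))"
    proof -
      have "(\<Sum>K\<in>F. c K * ennreal (w' K)) = c K0 * ennreal (w' K0) + (\<Sum>K\<in>F'. c K * ennreal (w' K))"
        unfolding F'_def using fin K0(1) by (rule sum.remove)
      moreover have "w' K0 = 0" unfolding w'_def m_def by simp
      ultimately show ?thesis by simp
    qed
    finally have sumeq: "(\<Sum>K\<in>F. c K * ennreal (w K)) = ennreal m * sum c F + (\<Sum>K\<in>F'. c K * ennreal (w' K))" .
    have Fs: "F \<subseteq> sets lborel" using less.prems(2) dyadic_props(2) by blast
    have F's: "F' \<subseteq> sets lborel" using Fs unfolding F'_def by blast
    have Us: "\<Union>F \<in> sets lborel" using Fs fin by (intro sets.finite_Union) auto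
    have ptw: "ennreal (maxw F w t) = ennreal m * indicator (\<Union>F) t + ennreal (maxw F' w' t)" for t
    proof -
      have "maxw F w t = m * indicator (\<Union>F) t + maxw F' w' t"
        unfolding F'_def w'_def using maxw_step[of F K0 m w t, OF fin K0(1) _ m_def m0] K0le m_def by simp
      thus ?thesis using m0 maxw_ge0[OF finF', of w' t]
        by (cases "t \<in> \<Union>F") (simp_all add: ennreal_plus)
    qed
    have inteq: "(\<integral>\<^sup>+t. ennreal (maxw F w t) \<partial>lborel) = ennreal m * len (\<Union>F) + (\<integral>\<^sup>+t. ennreal (maxw F' w' t) \<partial>lborel)"
    proof -
      have "(\<integral>\<^sup>+t. ennreal (maxw F w t) \<partial>lborel) = (\<integral>\<^sup>+t. ennreal m * indicator (\<Union>F) t + ennreal (maxw F' w' t) \<partial>lborel)"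
        using ptw by simp
      also have "\<dots> = (\<integral>\<^sup>+t. ennreal m * indicator (\<Union>F) t \<partial>lborel) + (\<integral>\<^sup>+t. ennreal (maxw F' w' t) \<partial>lborel)"
        using Us maxw_meas[OF finF' F's, of w'] by (intro nn_integral_add) auto
      also have "(\<integral>\<^sup>+t. ennreal m * indicator (\<Union>F) t \<partial>lborel) = ennreal m * len (\<Union>F)"
        using Us by (rule nn_integral_cmult_indicator)
      finally show ?thesis .
    qed
    have "ennreal m * sum c F \<le> ennreal m * (B * len (\<Union>F))"
      using less.prems(4)[of F] by (intro mult_left_mono) auto
    hence "(\<Sum>K\<in>F. c K * ennreal (w K)) \<le> ennreal m * (B * len (\<Union>F)) + B * (\<integral>\<^sup>+t. ennreal (maxw F' w' t) \<partial>lborel)"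
      unfolding sumeq using IH by (rule add_mono)
    also have "\<dots> = B * (\<integral>\<^sup>+t. ennreal (maxw F w t) \<partial>lborel)"
      unfolding inteq by (simp add: algebra_simps)
    finally show ?thesis .
  qed
qed

definition wt :: "(real set \<Rightarrow> real set) \<Rightarrow> real set \<Rightarrow> real" where
  "wt \<tau> K = measure lborel (sigma_of \<tau> K) / measure lborel K"

lemma wt_nonneg: "0 \<le> wt \<tau> K" unfolding wt_def by simp

lemma sigma_dyadic: "K \<in> \<tau> ` dyadic \<Longrightarrow> sigma_of \<tau> K \<in> dyadic"
  unfolding sigma_of_def by (rule inv_into_into)

lemma wt_ennreal:
  assumes "K \<in> \<tau> ` dyadic" "\<tau> ` dyadic \<subseteq> dyadic"
  shows "ennreal (wt \<tau> K) = len (sigma_of \<tau> K) / len K"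
proof -
  have K: "K \<in> dyadic" using assms by blast
  have s: "sigma_of \<tau> K \<in> dyadic" using assms(1) by (rule sigma_dyadic)
  show ?thesis unfolding wt_def dyadic_props(4)[OF K] dyadic_props(4)[OF s]
    using dyadic_props(3)[OF K] by (simp add: divide_ennreal)
qed

lemma maxw_le_mu:
  assumes "finite F" "F \<subseteq> H" "H \<subseteq> \<tau> ` dyadic" "\<tau> ` dyadic \<subseteq> dyadic"
  shows "ennreal (maxw F (wt \<tau>) t) \<le> mu \<tau> H t * indicator {0..<1} t"
proof -
  from maxw_in[OF assms(1), of "wt \<tau>" t]
  show ?thesis
  proof
    assume "maxw F (wt \<tau>) t = 0" thus ?thesis by simp
  next
    assume "\<exists>K\<in>F. maxw F (wt \<tau>) t = wt \<tau> K * indicator K t"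
    then obtain K where K: "K \<in> F" "maxw F (wt \<tau>) t = wt \<tau> K * indicator K t" by blast
    show ?thesis
    proof (cases "t \<in> K")
      case False
      have "maxw F (wt \<tau>) t = 0" using K(2) False by (simp add: indicator_def)
      thus ?thesis by simp
    next
      case True
      have KH: "K \<in> H" using K assms(2) by blast
      have Kd: "K \<in> \<tau> ` dyadic" using KH assms(3) by blast
      hence "K \<in> dyadic" using assms(4) by blast
      hence t01: "t \<in> {0..<1}" using True dyadic_props(1) by blast
      have "ennreal (maxw F (wt \<tau>) t) = len (sigma_of \<tau> K) / len K * indicator K t"
        using K True wt_ennreal[OF Kd assms(4)] by simp
      also have "\<dots> \<le> mu \<tau> H t" unfolding mu_def using KH by (rule SUP_upper)
      finally show ?thesis using t01 by simp
    qed
  qed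
qed

lemma middle_ge:
  assumes "H \<subseteq> \<tau> ` dyadic" "H \<noteq> {}"
  shows "(\<integral>\<^sup>+ t. mu \<tau> H t * indicator {0..<1} t \<partial>lborel) / len (\<Union> (sigma_of \<tau> ` H)) \<le> middle \<tau>"
  unfolding middle_def using assms by (intro SUP_upper) auto

lemma dir1:
  assumes tau: "\<tau> ` dyadic \<subseteq> dyadic" "inj_on \<tau> dyadic"
  shows "S_norm_sq \<tau> \<le> middle \<tau>"
  unfolding S_norm_sq_def
proof (rule Inf_lower, rule CollectI, intro allI impI)
  fix a :: "real set \<Rightarrow> real"
  define B where "B = bmo_sq a"
  show "bmo_sq (S_op \<tau> a) \<le> middle \<tau> * bmo_sq a"
    unfolding bmo_sq_def[of "S_op \<tau> a"]
  proof (rule SUP_least)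
    fix I assume I: "I \<in> dyadic"
    define A where "A = {J \<in> dyadic. J \<subseteq> I}"
    define H where "H = \<tau> ` A"
    have HD: "H \<subseteq> \<tau> ` dyadic" unfolding H_def A_def by blast
    have IA: "I \<in> A" unfolding A_def using I by simp
    have Hne: "H \<noteq> {}" unfolding H_def using IA by blast
    have unH: "\<Union> (sigma_of \<tau> ` H) = I"
    proof
      show "\<Union> (sigma_of \<tau> ` H) \<subseteq> I"
      proof
        fix x assume "x \<in> \<Union> (sigma_of \<tau> ` H)"
        then obtain J where J: "J \<in> A" "x \<in> sigma_of \<tau> (\<tau> J)" unfolding H_def by blast
        have "sigma_of \<tau> (\<tau> J) = J" using J(1) sigma_tau[OF tau(2)] unfolding A_def by blast
        thus "x \<in> I" using J unfolding A_def by blast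
      qed
      have "sigma_of \<tau> (\<tau> I) = I" using sigma_tau[OF tau(2) I] .
      moreover have "\<tau> I \<in> H" unfolding H_def using IA by blast
      ultimately show "I \<subseteq> \<Union> (sigma_of \<tau> ` H)" by blast
    qed
    have mid: "(\<integral>\<^sup>+ t. mu \<tau> H t * indicator {0..<1} t \<partial>lborel) \<le> middle \<tau> * len I"
      using middle_ge[OF HD Hne] unfolding unH using div_le_iff_ennreal dyadic_props(6,7)[OF I] by blast
    have "local_l2_sq (S_op \<tau> a) I \<le> (middle \<tau> * bmo_sq a) * len I"
      unfolding local_l2_sq_def
    proof (rule count_le)
      show "countable {J \<in> dyadic. J \<subseteq> I}" using countable_dyadic by (rule countable_subset[rotated]) blast
      fix G assume G: "finite G" "G \<subseteq> {J \<in> dyadic. J \<subseteq> I}"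
      define F where "F = \<tau> ` G"
      define c where "c K = ennreal ((a K)\<^sup>2) * len K" for K
      have injG: "inj_on \<tau> G" using G(2) by (intro inj_on_subset[OF tau(2)]) blast
      have finF: "finite F" unfolding F_def using G(1) by simp
      have FD: "F \<subseteq> dyadic" unfolding F_def using G(2) tau(1) by blast
      have FH: "F \<subseteq> H" unfolding F_def H_def A_def using G(2) by blast
      have eqG: "(\<Sum>J\<in>G. ennreal ((S_op \<tau> a J)\<^sup>2) * len J) = (\<Sum>K\<in>F. c K * ennreal (wt \<tau> K))"
        unfolding F_def
      proof (subst sum.reindex[OF injG], rule sum.cong[OF refl], simp only: o_def)
        fix J assume J: "J \<in> G"
        have Jd: "J \<in> dyadic" using J G(2) by blast
        have tJ: "\<tau> J \<in> dyadic" using Jd tau(1) by blast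
        have "len (\<tau> J) * ennreal (wt \<tau> (\<tau> J)) = len J"
          unfolding wt_def sigma_tau[OF tau(2) Jd] dyadic_props(4)[OF Jd] dyadic_props(4)[OF tJ]
          using dyadic_props(3)[OF tJ] dyadic_props(3)[OF Jd]
          by (simp add: ennreal_mult[symmetric] del: ennreal_mult)
        thus "ennreal ((S_op \<tau> a J)\<^sup>2) * len J = c (\<tau> J) * ennreal (wt \<tau> (\<tau> J))"
          unfolding c_def S_op_eq[OF tau(2) Jd] by (simp add: mult.assoc)
      qed
      have "(\<Sum>K\<in>F. c K * ennreal (wt \<tau> K)) \<le> bmo_sq a * (\<integral>\<^sup>+t. ennreal (maxw F (wt \<tau>) t) \<partial>lborel)"
      proof (rule embed[OF finF FD wt_nonneg])
        fix E assume "E \<subseteq> F"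
        hence "finite E" "E \<subseteq> dyadic" using finF FD finite_subset by blast+
        thus "sum c E \<le> bmo_sq a * len (\<Union> E)" unfolding c_def by (rule carleson)
      qed
      also have "\<dots> \<le> bmo_sq a * (\<integral>\<^sup>+ t. mu \<tau> H t * indicator {0..<1} t \<partial>lborel)"
        using maxw_le_mu[OF finF FH HD tau(1)] by (intro mult_left_mono nn_integral_mono) auto
      also have "\<dots> \<le> bmo_sq a * (middle \<tau> * len I)" using mid by (rule mult_left_mono) simp
      finally show "(\<Sum>J\<in>G. ennreal ((S_op \<tau> a J)\<^sup>2) * len J) \<le> middle \<tau> * bmo_sq a * len I"
        unfolding eqG by (simp add: algebra_simps)
    qed
    thus "local_l2_sq (S_op \<tau> a) I / len I \<le> middle \<tau> * bmo_sq a"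
      using div_le_iff_ennreal dyadic_props(6,7)[OF I] by blast
  qed
qed

definition selE :: "real set set \<Rightarrow> (real set \<Rightarrow> real) \<Rightarrow> real set \<Rightarrow> real set" where
  "selE F w K = {t \<in> K. \<forall>K'\<in>F. t \<in> K' \<longrightarrow> (w K' < w K \<or> (w K' = w K \<and> K' \<subseteq> K))}"

lemma selE_sub: "selE F w K \<subseteq> K" unfolding selE_def by auto

lemma selE_disj:
  assumes "K \<in> F" "K' \<in> F" "K \<noteq> K'"
  shows "selE F w K \<inter> selE F w K' = {}"
proof (rule ccontr)
  assume "selE F w K \<inter> selE F w K' \<noteq> {}"
  then obtain t where t: "t \<in> selE F w K" "t \<in> selE F w K'" by blast
  have "t \<in> K" "t \<in> K'" using t selE_sub by blast+
  hence "w K' < w K \<or> (w K' = w K \<and> K' \<subseteq> K)" "w K < w K' \<or> (w K = w K' \<and> K \<subseteq> K')"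
    using t assms unfolding selE_def by auto
  thus False using assms(3) by auto
qed

lemma selE_meas:
  assumes "finite F" "F \<subseteq> sets lborel" "K \<in> sets lborel"
  shows "selE F w K \<in> sets lborel"
proof -
  have "selE F w K = K - \<Union>{K'\<in>F. \<not> (w K' < w K \<or> (w K' = w K \<and> K' \<subseteq> K))}"
    unfolding selE_def by blast
  moreover have "\<Union>{K'\<in>F. \<not> (w K' < w K \<or> (w K' = w K \<and> K' \<subseteq> K))} \<in> sets lborel"
    using assms(1,2) by (intro sets.finite_Union) auto
  ultimately show ?thesis using assms(3) by simp
qed

lemma selE_exists:
  assumes F: "finite F" "F \<subseteq> dyadic" and t: "t \<in> \<Union>F"
  shows "\<exists>K\<in>F. t \<in> selE F w K"
proof -
  define S where "S = {K\<in>F. t \<in> K}"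
  have fS: "finite S" "S \<noteq> {}" unfolding S_def using F t by auto
  define M where "M = Max (w ` S)"
  define S2 where "S2 = {K\<in>S. w K = M}"
  have "M \<in> w ` S" unfolding M_def using fS by (intro Max_in) auto
  hence S2ne: "S2 \<noteq> {}" unfolding S2_def by auto
  have fS2: "finite S2" unfolding S2_def using fS by simp
  obtain K where K: "K \<in> S2" "\<And>b. b \<in> S2 \<Longrightarrow> K \<subseteq> b \<Longrightarrow> K = b"
    using finite_has_maximal[OF fS2 S2ne] by blast
  have KF: "K \<in> F" "t \<in> K" "w K = M" using K(1) unfolding S2_def S_def by auto
  have "t \<in> selE F w K"
    unfolding selE_def
  proof (intro CollectI conjI ballI impI)
    show "t \<in> K" by (rule KF(2))
    fix K' assume K': "K' \<in> F" "t \<in> K'"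
    have K'S: "K' \<in> S" unfolding S_def using K' by simp
    have le: "w K' \<le> w K" unfolding KF(3) M_def using fS K'S by simp
    show "w K' < w K \<or> (w K' = w K \<and> K' \<subseteq> K)"
    proof (cases "w K' < w K")
      case False
      hence eq: "w K' = w K" using le by simp
      hence K'S2: "K' \<in> S2" unfolding S2_def using K'S KF(3) by simp
      have "K \<inter> K' \<noteq> {}" using KF(2) K'(2) by blast
      hence "K \<subseteq> K' \<or> K' \<subseteq> K" using dyadic_nest KF(1) K'(1) F(2) by blast
      hence "K' \<subseteq> K" using K(2)[OF K'S2] by blast
      thus ?thesis using eq by simp
    qed simp
  qed
  thus ?thesis using KF(1) by blast
qed

lemma maxw_selE:
  assumes F: "finite F" "F \<subseteq> dyadic" and w0: "\<And>K. 0 \<le> w K"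
  shows "maxw F w t = (\<Sum>K\<in>F. w K * indicator (selE F w K) t)"
proof (cases "t \<in> \<Union>F")
  case False
  hence "\<And>K. K \<in> F \<Longrightarrow> t \<notin> selE F w K" using selE_sub by blast
  thus ?thesis using maxw_zero[OF F(1) False] by simp
next
  case True
  then obtain K where K: "K \<in> F" "t \<in> selE F w K" using selE_exists[OF F] by blast
  have tK: "t \<in> K" using K(2) selE_sub by blast
  have "(\<Sum>K'\<in>F. w K' * indicator (selE F w K') t) = w K * indicator (selE F w K) t + (\<Sum>K'\<in>F - {K}. w K' * indicator (selE F w K') t)"
    using F(1) K(1) by (rule sum.remove)
  also have "(\<Sum>K'\<in>F - {K}. w K' * indicator (selE F w K') t) = 0"
  proof (rule sum.neutral, rule ballI)
    fix K' assume "K' \<in> F - {K}"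
    hence "t \<notin> selE F w K'" using selE_disj[of K F K' w] K by blast
    thus "w K' * indicator (selE F w K') t = 0" by simp
  qed
  finally have s: "(\<Sum>K'\<in>F. w K' * indicator (selE F w K') t) = w K" using K(2) by simp
  have "maxw F w t = w K"
  proof (rule antisym)
    show "maxw F w t \<le> w K"
    proof (rule maxw_le[OF F(1)])
      show "0 \<le> w K" by (rule w0)
      fix K' assume K': "K' \<in> F"
      show "w K' * indicator K' t \<le> w K"
      proof (cases "t \<in> K'")
        case True
        hence "w K' < w K \<or> (w K' = w K \<and> K' \<subseteq> K)" using K(2) K' unfolding selE_def by blast
        thus ?thesis using True by auto
      next
        case False thus ?thesis using w0[of K] by simp
      qed
    qed
    show "w K \<le> maxw F w t" using maxw_ge[OF F(1) K(1), of w t] tK by simp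
  qed
  thus ?thesis using s by simp
qed

lemma fin_bound:
  assumes tau: "\<tau> ` dyadic \<subseteq> dyadic" "inj_on \<tau> dyadic"
    and C: "\<And>a. bmo_sq a < top \<Longrightarrow> bmo_sq (S_op \<tau> a) \<le> C * bmo_sq a"
    and F: "finite F" "F \<subseteq> \<tau> ` dyadic"
  shows "(\<integral>\<^sup>+t. ennreal (maxw F (wt \<tau>) t) \<partial>lborel) \<le> C * len (\<Union> (sigma_of \<tau> ` F))"
proof -
  define w where "w = wt \<tau>"
  define E where "E = selE F w"
  define a where "a K = (if K \<in> F then sqrt (measure lborel (E K) / measure lborel K) else 0)" for K
  have FD: "F \<subseteq> dyadic" using F tau by blast
  have Fs: "F \<subseteq> sets lborel" using FD dyadic_props(2) by blast
  have w0: "\<And>K. 0 \<le> w K" unfolding w_def by (rule wt_nonneg)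
  have Es: "E K \<in> sets lborel" if "K \<in> F" for K
    unfolding E_def using F(1) Fs Fs that by (intro selE_meas) auto
  have EK: "E K \<subseteq> K" for K unfolding E_def by (rule selE_sub)
  have lenE: "len (E K) = ennreal (measure lborel (E K))" and lenEK: "len (E K) \<le> len K" if K: "K \<in> F" for K
  proof -
    have Kd: "K \<in> dyadic" using K FD by blast
    show "len (E K) \<le> len K" using EK dyadic_props(2)[OF Kd] by (rule emeasure_mono)
    hence "len (E K) \<noteq> top" using dyadic_props(7)[OF Kd] by (metis top.not_eq_extremum leD)
    thus "len (E K) = ennreal (measure lborel (E K))" by (rule emeasure_eq_ennreal_measure)
  qed
  have mEK: "measure lborel (E K) \<le> measure lborel K" if K: "K \<in> F" for K
  proof -
    have Kd: "K \<in> dyadic" using K FD by blast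
    have "ennreal (measure lborel (E K)) \<le> ennreal (measure lborel K)"
      using lenEK[OF K] lenE[OF K] dyadic_props(4)[OF Kd] by simp
    thus ?thesis using dyadic_props(3)[OF Kd] by (simp add: ennreal_le_iff)
  qed
  have a2: "(a K)\<^sup>2 = measure lborel (E K) / measure lborel K" if "K \<in> F" for K
    unfolding a_def using that by simp
  have int: "(\<integral>\<^sup>+t. ennreal (maxw F w t) \<partial>lborel) = (\<Sum>K\<in>F. ennreal (w K) * len (E K))"
  proof -
    have "(\<integral>\<^sup>+t. ennreal (maxw F w t) \<partial>lborel) = (\<integral>\<^sup>+t. (\<Sum>K\<in>F. ennreal (w K) * indicator (E K) t) \<partial>lborel)"
    proof (rule nn_integral_cong)
      fix t
      have "ennreal (maxw F w t) = ennreal (\<Sum>K\<in>F. w K * indicator (E K) t)"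
        unfolding E_def using maxw_selE[OF F(1) FD w0] by simp
      also have "\<dots> = (\<Sum>K\<in>F. ennreal (w K * indicator (E K) t))"
        using w0 by (intro sum_ennreal[symmetric]) simp
      also have "\<dots> = (\<Sum>K\<in>F. ennreal (w K) * indicator (E K) t)"
        by (intro sum.cong refl) (simp add: indicator_def)
      finally show "ennreal (maxw F w t) = (\<Sum>K\<in>F. ennreal (w K) * indicator (E K) t)" .
    qed
    also have "\<dots> = (\<Sum>K\<in>F. (\<integral>\<^sup>+t. ennreal (w K) * indicator (E K) t \<partial>lborel))"
      using Es by (intro nn_integral_sum) auto
    also have "\<dots> = (\<Sum>K\<in>F. ennreal (w K) * len (E K))"
      using Es by (intro sum.cong refl nn_integral_cmult_indicator) auto
    finally show ?thesis .
  qed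
  have bmoa: "bmo_sq a \<le> 1"
    unfolding bmo_sq_def
  proof (rule SUP_least)
    fix L assume L: "L \<in> dyadic"
    define P where "P = {J \<in> F. J \<subseteq> L}"
    have fP: "finite P" unfolding P_def using F(1) by simp
    have "local_l2_sq a L = (\<Sum>J\<in>P. ennreal ((a J)\<^sup>2) * len J)"
      unfolding local_l2_sq_def
      by (rule nn_integral_count_space') (use fP FD in \<open>auto simp: P_def a_def\<close>)
    also have "\<dots> = (\<Sum>J\<in>P. len (E J))"
    proof (rule sum.cong[OF refl])
      fix J assume J: "J \<in> P"
      hence JF: "J \<in> F" unfolding P_def by simp
      hence Jd: "J \<in> dyadic" using FD by blast
      have "ennreal ((a J)\<^sup>2) * len J = ennreal (measure lborel (E J) / measure lborel J * measure lborel J)"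
        unfolding a2[OF JF] dyadic_props(4)[OF Jd] using dyadic_props(3)[OF Jd]
        by (simp add: ennreal_mult[symmetric] del: ennreal_mult)
      also have "\<dots> = len (E J)" using dyadic_props(3)[OF Jd] lenE[OF JF] by simp
      finally show "ennreal ((a J)\<^sup>2) * len J = len (E J)" .
    qed
    also have "\<dots> = len (\<Union>J\<in>P. E J)"
    proof (rule sum_emeasure)
      show "E ` P \<subseteq> sets lborel" using Es unfolding P_def by blast
      show "disjoint_family_on E P" unfolding disjoint_family_on_def E_def P_def
        using selE_disj by blast
    qed (rule fP)
    also have "\<dots> \<le> len L"
      using EK dyadic_props(2)[OF L] unfolding P_def by (intro emeasure_mono) auto
    finally have "local_l2_sq a L \<le> 1 * len L" by simp
    thus "local_l2_sq a L / len L \<le> 1" using div_le_iff_ennreal dyadic_props(6,7)[OF L] by blast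
  qed
  have bSa: "bmo_sq (S_op \<tau> a) \<le> C"
  proof -
    have "bmo_sq a < top" using bmoa by (simp add: le_less_trans)
    hence "bmo_sq (S_op \<tau> a) \<le> C * bmo_sq a" by (rule C)
    also have "\<dots> \<le> C * 1" using bmoa by (rule mult_left_mono) simp
    finally show ?thesis by simp
  qed
  have injs: "inj_on (sigma_of \<tau>) F" unfolding sigma_of_def using F(2) by (rule inj_on_inv_into)
  have sigF: "sigma_of \<tau> ` F \<subseteq> dyadic" using sigma_dyadic F(2) by blast
  have re: "(\<Sum>K\<in>F. ennreal (w K) * len (E K)) = (\<Sum>J\<in>sigma_of \<tau> ` F. ennreal ((S_op \<tau> a J)\<^sup>2) * len J)"
  proof (subst sum.reindex[OF injs], rule sum.cong[OF refl], simp only: o_def)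
    fix K assume K: "K \<in> F"
    define J where "J = sigma_of \<tau> K"
    have Jd: "J \<in> dyadic" unfolding J_def using K F(2) sigma_dyadic by blast
    have tJ: "\<tau> J = K" unfolding J_def sigma_of_def using K F(2) by (intro f_inv_into_f) blast
    have Kd: "K \<in> dyadic" using K FD by blast
    have "ennreal ((S_op \<tau> a J)\<^sup>2) * len J = ennreal (measure lborel (E K) / measure lborel K * measure lborel J)"
      unfolding S_op_eq[OF tau(2) Jd] tJ a2[OF K] dyadic_props(4)[OF Jd] using dyadic_props(3)[OF Kd]
      by (simp add: ennreal_mult[symmetric] del: ennreal_mult)
    also have "\<dots> = ennreal (w K) * len (E K)"
      unfolding lenE[OF K] w_def wt_def J_def[symmetric] using dyadic_props(3)[OF Kd]
      by (simp add: ennreal_mult[symmetric] del: ennreal_mult)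
    finally show "ennreal (w K) * len (E K) = ennreal ((S_op \<tau> a (sigma_of \<tau> K))\<^sup>2) * len (sigma_of \<tau> K)"
      unfolding J_def by simp
  qed
  have "(\<integral>\<^sup>+t. ennreal (maxw F (wt \<tau>) t) \<partial>lborel) = (\<Sum>J\<in>sigma_of \<tau> ` F. ennreal ((S_op \<tau> a J)\<^sup>2) * len J)"
    using int re unfolding w_def by simp
  also have "\<dots> \<le> bmo_sq (S_op \<tau> a) * len (\<Union> (sigma_of \<tau> ` F))"
    using F(1) sigF by (intro carleson) auto
  also have "\<dots> \<le> C * len (\<Union> (sigma_of \<tau> ` F))" using bSa by (rule mult_right_mono) simp
  finally show ?thesis .
qed

lemma maxw_mono: "finite F' \<Longrightarrow> F \<subseteq> F' \<Longrightarrow> maxw F w t \<le> maxw F' w t"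
  by (rule maxw_le) (auto intro: finite_subset maxw_ge0 maxw_ge)

lemma dir2:
  assumes tau: "\<tau> ` dyadic \<subseteq> dyadic" "inj_on \<tau> dyadic"
  shows "middle \<tau> \<le> S_norm_sq \<tau>"
  unfolding middle_def
proof (rule SUP_least)
  fix H assume "H \<in> {H. H \<subseteq> \<tau> ` dyadic \<and> H \<noteq> {}}"
  hence H: "H \<subseteq> \<tau> ` dyadic" "H \<noteq> {}" by auto
  define U where "U = \<Union> (sigma_of \<tau> ` H)"
  have sH: "sigma_of \<tau> ` H \<subseteq> dyadic" using sigma_dyadic H(1) by blast
  have cH: "countable H" using H(1) countable_dyadic by (metis countable_image countable_subset)
  have Us: "U \<in> sets lborel" unfolding U_def
    using sH dyadic_props(2) cH by (intro sets.countable_Union) auto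
  have U01: "U \<subseteq> {0..<1}" unfolding U_def using sH dyadic_props(1) by blast
  have Utop: "len U < top"
  proof -
    have "len U \<le> len {0..<(1::real)}" using U01 by (intro emeasure_mono) auto
    thus ?thesis by (simp add: le_less_trans)
  qed
  obtain K0 where K0: "K0 \<in> H" using H(2) by blast
  have J0: "sigma_of \<tau> K0 \<in> dyadic" using K0 sH by blast
  have "len (sigma_of \<tau> K0) \<le> len U" unfolding U_def using K0 Us U_def by (intro emeasure_mono) auto
  hence U0: "len U \<noteq> 0" using dyadic_props(6)[OF J0] by (metis le_zero_eq)
  show "(\<integral>\<^sup>+ t. mu \<tau> H t * indicator {0..<1} t \<partial>lborel) / len (\<Union> (sigma_of \<tau> ` H)) \<le> S_norm_sq \<tau>"
    unfolding S_norm_sq_def U_def[symmetric]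
  proof (rule Inf_greatest)
    fix C assume "C \<in> {C. \<forall>a. bmo_sq a < top \<longrightarrow> bmo_sq (S_op \<tau> a) \<le> C * bmo_sq a}"
    hence Ca: "\<And>a. bmo_sq a < top \<Longrightarrow> bmo_sq (S_op \<tau> a) \<le> C * bmo_sq a" by auto
    define g where "g n = from_nat_into H ` {..n}" for n
    have gH: "g n \<subseteq> H" for n unfolding g_def using from_nat_into[OF H(2)] by blast
    have fg: "finite (g n)" for n unfolding g_def by simp
    have gs: "g n \<subseteq> sets lborel" for n using gH H(1) tau(1) dyadic_props(2) by blast
    have ptw: "mu \<tau> H t * indicator {0..<1} t \<le> (SUP n. ennreal (maxw (g n) (wt \<tau>) t))" for t
    proof (cases "t \<in> {0..<1}")
      case False thus ?thesis by simp
    next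
      case True
      have "mu \<tau> H t \<le> (SUP n. ennreal (maxw (g n) (wt \<tau>) t))"
        unfolding mu_def
      proof (rule SUP_least)
        fix K assume K: "K \<in> H"
        obtain n where n: "K = from_nat_into H n" using range_from_nat_into[OF H(2) cH] K by (metis rangeE)
        have Kg: "K \<in> g n" unfolding g_def n by blast
        have KD: "K \<in> \<tau> ` dyadic" using K H(1) by blast
        have "len (sigma_of \<tau> K) / len K * indicator K t = ennreal (wt \<tau> K * indicator K t)"
          using wt_ennreal[OF KD tau(1)] by (simp add: indicator_def)
        also have "\<dots> \<le> ennreal (maxw (g n) (wt \<tau>) t)"
          by (intro ennreal_leI maxw_ge[OF fg Kg])
        also have "\<dots> \<le> (SUP n. ennreal (maxw (g n) (wt \<tau>) t))" by (rule SUP_upper) simp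
        finally show "len (sigma_of \<tau> K) / len K * indicator K t \<le> (SUP n. ennreal (maxw (g n) (wt \<tau>) t))" .
      qed
      thus ?thesis using True by simp
    qed
    have inc: "incseq (\<lambda>n t. ennreal (maxw (g n) (wt \<tau>) t))"
    proof (rule incseq_SucI)
      fix n
      have "g n \<subseteq> g (Suc n)" unfolding g_def by auto
      thus "(\<lambda>t. ennreal (maxw (g n) (wt \<tau>) t)) \<le> (\<lambda>t. ennreal (maxw (g (Suc n)) (wt \<tau>) t))"
        using fg by (auto simp: le_fun_def intro!: ennreal_leI maxw_mono)
    qed
    have "(\<integral>\<^sup>+ t. mu \<tau> H t * indicator {0..<1} t \<partial>lborel) \<le> (\<integral>\<^sup>+ t. (SUP n. ennreal (maxw (g n) (wt \<tau>) t)) \<partial>lborel)"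
      using ptw by (intro nn_integral_mono) auto
    also have "\<dots> = (SUP n. \<integral>\<^sup>+ t. ennreal (maxw (g n) (wt \<tau>) t) \<partial>lborel)"
      using inc maxw_meas[OF fg gs] by (intro nn_integral_monotone_convergence_SUP) auto
    also have "\<dots> \<le> C * len U"
    proof (rule SUP_least)
      fix n
      have "(\<integral>\<^sup>+ t. ennreal (maxw (g n) (wt \<tau>) t) \<partial>lborel) \<le> C * len (\<Union> (sigma_of \<tau> ` g n))"
        using gH H(1) by (intro fin_bound[OF tau Ca fg]) blast+
      also have "\<dots> \<le> C * len U"
        using gH Us unfolding U_def by (intro mult_left_mono emeasure_mono) auto
      finally show "(\<integral>\<^sup>+ t. ennreal (maxw (g n) (wt \<tau>) t) \<partial>lborel) \<le> C * len U" .
    qed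
    finally show "(\<integral>\<^sup>+ t. mu \<tau> H t * indicator {0..<1} t \<partial>lborel) / len U \<le> C"
      using div_le_iff_ennreal[OF U0 Utop] by blast
  qed
qed

theorem proposition1:
  shows "\<exists>A::real. A > 0 \<and>
    (\<forall>\<tau>. \<tau> ` dyadic \<subseteq> dyadic \<and> inj_on \<tau> dyadic \<longrightarrow>
       S_norm_sq \<tau> / ennreal A \<le> middle \<tau> \<and> middle \<tau> \<le> S_norm_sq \<tau>)"
proof (rule exI[of _ 1], intro conjI allI impI)
  show "(0::real) < 1" by simp
  fix \<tau> assume tau: "\<tau> ` dyadic \<subseteq> dyadic \<and> inj_on \<tau> dyadic"
  have "S_norm_sq \<tau> / 1 = S_norm_sq \<tau>" using mult_divide_eq_ennreal[of 1 "S_norm_sq \<tau>"] by simp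
  thus "S_norm_sq \<tau> / ennreal 1 \<le> middle \<tau>" using dir1[of \<tau>] tau by simp
  show "middle \<tau> \<le> S_norm_sq \<tau>" using dir2[of \<tau>] tau by simp
qed

end
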